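(* For every 3-periodic of the elliptic billiard, the ratio of the area $A'$ of its outer triangle to its area $A$ is $$\frac{A'}{A}=\frac{2}{JL-4}.$$
   Context: The elliptic billiard is $\mathcal{E}: x^2/a^2+y^2/b^2=1$, $a>b>0$, $c=\sqrt{a^2-b^2}$. A 3-periodic is a triangle $P_1P_2P_3$ inscribed in $\mathcal{E}$ that is a closed billiard trajectory (at each vertex the normal to $\mathcal{E}$ bisects the angle between the two incident sides). Its outer triangle has as sides the tangent lines to $\mathcal{E}$ at $P_1,P_2,P_3$. $L$ is the perimeter (the same for all 3-periodics) and $J$ is Joachimsthal's constant, $J=\frac12\nabla f(P_i)\cdot\hat v>0$ with $f=x^2/a^2+y^2/b^2$ and $\hat v$ the unit direction of the trajectory at $P_i$; explicitly with $\delta=\sqrt{a^4-a^2b^2+b^4}$, $J=\sqrt{2\delta-a^2-b^2}/c^2$ and $L=2(\delta+a^2+b^2)J$. *)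

theory Defs
  imports Complex_Main
begin

type_synonym pt = "real \<times> real"

definition cross2 :: "pt \<Rightarrow> pt \<Rightarrow> real" where
  "cross2 u v = fst u * snd v - snd u * fst v"

definition dist2 :: "pt \<Rightarrow> pt \<Rightarrow> real" where
  "dist2 P Q = sqrt ((fst P - fst Q)^2 + (snd P - snd Q)^2)"

definition on_ellipse :: "real \<Rightarrow> real \<Rightarrow> pt \<Rightarrow> bool" where
  "on_ellipse a b P \<longleftrightarrow> (fst P)^2 / a^2 + (snd P)^2 / b^2 = 1"

definition ell_normal :: "real \<Rightarrow> real \<Rightarrow> pt \<Rightarrow> pt" where
  "ell_normal a b P = (fst P / a^2, snd P / b^2)"

definition unit_dir :: "pt \<Rightarrow> pt \<Rightarrow> pt" where
  "unit_dir P Q = ((fst Q - fst P) / dist2 P Q, (snd Q - snd P) / dist2 P Q)"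

text \<open>At vertex P with neighbours U and W the normal to the ellipse bisects the angle UPW:
  the sum of the unit vectors from P towards U and towards W is parallel to the normal.\<close>
definition bounce :: "real \<Rightarrow> real \<Rightarrow> pt \<Rightarrow> pt \<Rightarrow> pt \<Rightarrow> bool" where
  "bounce a b U P W \<longleftrightarrow>
     cross2 (fst (unit_dir P U) + fst (unit_dir P W), snd (unit_dir P U) + snd (unit_dir P W))
            (ell_normal a b P) = 0"

definition three_periodic :: "real \<Rightarrow> real \<Rightarrow> pt \<Rightarrow> pt \<Rightarrow> pt \<Rightarrow> bool" where
  "three_periodic a b P1 P2 P3 \<longleftrightarrow>
     on_ellipse a b P1 \<and> on_ellipse a b P2 \<and> on_ellipse a b P3 \<and>
     cross2 (fst P2 - fst P1, snd P2 - snd P1) (fst P3 - fst P1, snd P3 - snd P1) \<noteq> 0 \<and>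
     bounce a b P3 P1 P2 \<and> bounce a b P1 P2 P3 \<and> bounce a b P2 P3 P1"

definition tri_area :: "pt \<Rightarrow> pt \<Rightarrow> pt \<Rightarrow> real" where
  "tri_area P Q R = \<bar>cross2 (fst Q - fst P, snd Q - snd P) (fst R - fst P, snd R - snd P)\<bar> / 2"

definition on_tangent :: "real \<Rightarrow> real \<Rightarrow> pt \<Rightarrow> pt \<Rightarrow> bool" where
  "on_tangent a b P X \<longleftrightarrow> fst X * fst P / a^2 + snd X * snd P / b^2 = 1"

definition tangent_meet :: "real \<Rightarrow> real \<Rightarrow> pt \<Rightarrow> pt \<Rightarrow> pt" where
  "tangent_meet a b P Q = (THE X. on_tangent a b P X \<and> on_tangent a b Q X)"

definition outer_area :: "real \<Rightarrow> real \<Rightarrow> pt \<Rightarrow> pt \<Rightarrow> pt \<Rightarrow> real" where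
  "outer_area a b P1 P2 P3 =
     tri_area (tangent_meet a b P1 P2) (tangent_meet a b P2 P3) (tangent_meet a b P3 P1)"

definition ell_delta :: "real \<Rightarrow> real \<Rightarrow> real" where
  "ell_delta a b = sqrt (a^4 - a^2 * b^2 + b^4)"

definition joach_J :: "real \<Rightarrow> real \<Rightarrow> real" where
  "joach_J a b = sqrt (2 * ell_delta a b - a^2 - b^2) / (a^2 - b^2)"

definition perim_L :: "real \<Rightarrow> real \<Rightarrow> real" where
  "perim_L a b = 2 * (ell_delta a b + a^2 + b^2) * joach_J a b"

end

theory Submission
  imports Defs
begin


lemma alg_bounce:
  fixes e1x e1y e2x e2y nx ny :: real
  assumes "e1x^2+e1y^2=1" "e2x^2+e2y^2=1" "(e1x+e2x)*ny - (e1y+e2y)*nx = 0" "e1x*e2y - e1y*e2x \<noteq> 0"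
  shows "nx*e1x+ny*e1y = nx*e2x+ny*e2y"
  using assms by algebra

definition dd :: "real \<Rightarrow> real \<Rightarrow> real \<Rightarrow> real \<Rightarrow> real \<Rightarrow> real \<Rightarrow> real" where
  "dd a b x y x' y' = sqrt (a^2*(x-x')^2 + b^2*(y-y')^2)"

lemma dd_sym: "dd a b x y x' y' = dd a b x' y' x y"
  unfolding dd_def by (simp add: power2_commute)

lemma dd_pos:
  assumes "a>0" "b>0" "(x,y) \<noteq> (x',y')"
  shows "dd a b x y x' y' > 0"
proof -
  have "x \<noteq> x' \<or> y \<noteq> y'" using assms by auto
  then have "a^2*(x-x')^2 + b^2*(y-y')^2 > 0"
    using assms by (auto intro: add_pos_nonneg add_nonneg_pos)
  then show ?thesis unfolding dd_def by simp
qed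

lemma dd_sq: "dd a b x y x' y' ^2 = a^2*(x-x')^2 + b^2*(y-y')^2"
  unfolding dd_def by simp

lemma bounce_circ:
  fixes a b x y xu yu xw yw :: real
  assumes ab: "a>0" "b>0" and c: "x^2+y^2=1"
    and nd: "(xu-x)*(yw-y) - (yu-y)*(xw-x) \<noteq> 0"
    and bo: "bounce a b (a*xu,b*yu) (a*x,b*y) (a*xw,b*yw)"
  shows "(x*xu+y*yu-1)/dd a b x y xu yu = (x*xw+y*yw-1)/dd a b x y xw yw"
proof -
  have neu: "(x,y) \<noteq> (xu,yu)" using nd by auto
  have new: "(x,y) \<noteq> (xw,yw)" using nd by auto
  define du where "du = dd a b x y xu yu"
  define dw where "dw = dd a b x y xw yw"
  have du: "du > 0" unfolding du_def using dd_pos[OF ab neu] .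
  have dw: "dw > 0" unfolding dw_def using dd_pos[OF ab new] .
  have dist1: "dist2 (a*x,b*y) (a*xu,b*yu) = du"
    unfolding dist2_def du_def dd_def by (simp add: power2_eq_square algebra_simps)
  have dist2': "dist2 (a*x,b*y) (a*xw,b*yw) = dw"
    unfolding dist2_def dw_def dd_def by (simp add: power2_eq_square algebra_simps)
  define e1x where "e1x = a*(xu-x)/du"
  define e1y where "e1y = b*(yu-y)/du"
  define e2x where "e2x = a*(xw-x)/dw"
  define e2y where "e2y = b*(yw-y)/dw"
  have ud1: "unit_dir (a*x,b*y) (a*xu,b*yu) = (e1x,e1y)"
    unfolding unit_dir_def dist1 e1x_def e1y_def by (simp add: algebra_simps)
  have ud2: "unit_dir (a*x,b*y) (a*xw,b*yw) = (e2x,e2y)"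
    unfolding unit_dir_def dist2' e2x_def e2y_def by (simp add: algebra_simps)
  have n: "ell_normal a b (a*x,b*y) = (x/a, y/b)"
    unfolding ell_normal_def using ab by (simp add: power2_eq_square)
  have h1: "(e1x+e2x)*(y/b) - (e1y+e2y)*(x/a) = 0"
    using bo unfolding bounce_def ud1 ud2 n cross2_def by simp
  have u1: "e1x^2+e1y^2=1"
  proof -
    have "du^2 = a^2*(xu-x)^2 + b^2*(yu-y)^2" unfolding du_def dd_sq by (simp add: power2_commute)
    moreover have "e1x^2+e1y^2 = (a^2*(xu-x)^2+b^2*(yu-y)^2)/du^2"
      unfolding e1x_def e1y_def by (simp add: power_divide power_mult_distrib add_divide_distrib)
    ultimately show ?thesis using du by (metis divide_self less_irrefl zero_less_power)
  qed
  have u2: "e2x^2+e2y^2=1"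
  proof -
    have "dw^2 = a^2*(xw-x)^2 + b^2*(yw-y)^2" unfolding dw_def dd_sq by (simp add: power2_commute)
    moreover have "e2x^2+e2y^2 = (a^2*(xw-x)^2+b^2*(yw-y)^2)/dw^2"
      unfolding e2x_def e2y_def by (simp add: power_divide power_mult_distrib add_divide_distrib)
    ultimately show ?thesis using dw by (metis divide_self less_irrefl zero_less_power)
  qed
  have cr: "e1x*e2y - e1y*e2x \<noteq> 0"
  proof -
    have "e1x*e2y - e1y*e2x = a*b*((xu-x)*(yw-y) - (yu-y)*(xw-x))/(du*dw)"
      unfolding e1x_def e1y_def e2x_def e2y_def using du dw by (simp add: field_simps)
    then show ?thesis using ab du dw nd by simp
  qed
  have key: "(x/a)*e1x+(y/b)*e1y = (x/a)*e2x+(y/b)*e2y"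
    by (rule alg_bounce[OF u1 u2 h1 cr])
  have l: "(x/a)*e1x+(y/b)*e1y = (x*xu+y*yu-1)/du"
  proof -
    have "(x/a)*e1x+(y/b)*e1y = (x*(xu-x)+y*(yu-y))/du"
      unfolding e1x_def e1y_def using ab du by (simp add: field_simps)
    moreover have "x*(xu-x)+y*(yu-y) = x*xu+y*yu-1" using c by (simp add: algebra_simps power2_eq_square)
    ultimately show ?thesis by simp
  qed
  have r: "(x/a)*e2x+(y/b)*e2y = (x*xw+y*yw-1)/dw"
  proof -
    have "(x/a)*e2x+(y/b)*e2y = (x*(xw-x)+y*(yw-y))/dw"
      unfolding e2x_def e2y_def using ab dw by (simp add: field_simps)
    moreover have "x*(xw-x)+y*(yw-y) = x*xw+y*yw-1" using c by (simp add: algebra_simps power2_eq_square)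
    ultimately show ?thesis by simp
  qed
  show ?thesis using key l r du_def dw_def by simp
qed



lemma pair_rel:
  fixes xi yi xj yj a b K :: real
  assumes "xi^2+yi^2=1" "xj^2+yj^2=1" "xi*xj+yi*yj \<noteq> 1"
    "(1-(xi*xj+yi*yj))^2 = K*(a^2*(xi-xj)^2+b^2*(yi-yj)^2)"
  shows "(1-K*(a^2-b^2))*xi*xj + (1+K*(a^2-b^2))*yi*yj = 1-K*(a^2+b^2)"
proof -
  have e: "a^2*(xi-xj)^2+b^2*(yi-yj)^2 = (1-(xi*xj+yi*yj))*((a^2+b^2) - (a^2-b^2)*xi*xj + (a^2-b^2)*yi*yj)"
    using assms(1,2) by algebra
  have "(1-(xi*xj+yi*yj))*((1-(xi*xj+yi*yj)) - K*((a^2+b^2) - (a^2-b^2)*xi*xj + (a^2-b^2)*yi*yj)) = 0"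
    using assms(4) unfolding e by (simp add: algebra_simps power2_eq_square)
  then have "(1-(xi*xj+yi*yj)) - K*((a^2+b^2) - (a^2-b^2)*xi*xj + (a^2-b^2)*yi*yj) = 0"
    using assms(3) by simp
  then show ?thesis by (simp add: algebra_simps)
qed

lemma vieta1_core:
  fixes x1 y1 x2 y2 x3 y3 p q r :: real
  assumes "x1^2+y1^2=1" "x2^2+y2^2=1" "x3^2+y3^2=1"
    "p*x1*x2+q*y1*y2=r" "p*x1*x3+q*y1*y3=r" "p*x2*x3+q*y2*y3=r" "x2 \<noteq> x3"
  shows "(p^2*(q+r) - q^2*(p+r))*x1^2 = (p+q)*r^2 - q^2*(p+r)"
  using assms by algebra

lemma vieta1:
  fixes x1 y1 x2 y2 x3 y3 p q r :: real
  assumes "x1^2+y1^2=1" "x2^2+y2^2=1" "x3^2+y3^2=1"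
    "p*x1*x2+q*y1*y2=r" "p*x1*x3+q*y1*y3=r" "p*x2*x3+q*y2*y3=r" "(x2,y2) \<noteq> (x3,y3)"
  shows "(p^2*(q+r) - q^2*(p+r))*x1^2 = (p+q)*r^2 - q^2*(p+r)"
proof (cases "x2 = x3")
  case True
  then have "y2 \<noteq> y3" using assms by auto
  have h: "(q^2*(p+r) - p^2*(q+r))*y1^2 = (q+p)*r^2 - p^2*(q+r)"
    by (rule vieta1_core[of y1 x1 y2 x2 y3 x3 q p r]) (use assms \<open>y2 \<noteq> y3\<close> in \<open>simp_all add: algebra_simps\<close>)
  show ?thesis using h assms(1) by algebra
next
  case False
  from vieta1_core[OF _ _ _ _ _ _ False] assms show ?thesis by simp
qed

lemma prodA_core:
  fixes x1 y1 x2 y2 x3 y3 p q r :: real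
  assumes "x1^2+y1^2=1" "x2^2+y2^2=1" "x3^2+y3^2=1"
    "p*x1*x2+q*y1*y2=r" "p*x1*x3+q*y1*y3=r" "x2 \<noteq> x3"
  shows "(1+x2*x3+y2*y3)*(p^2*x1^2+q^2*y1^2) = 2*r^2"
  using assms by algebra

lemma prodA:
  fixes x1 y1 x2 y2 x3 y3 p q r :: real
  assumes "x1^2+y1^2=1" "x2^2+y2^2=1" "x3^2+y3^2=1"
    "p*x1*x2+q*y1*y2=r" "p*x1*x3+q*y1*y3=r" "(x2,y2) \<noteq> (x3,y3)"
  shows "(1+x2*x3+y2*y3)*(p^2*x1^2+q^2*y1^2) = 2*r^2"
proof (cases "x2 = x3")
  case True
  then have "y2 \<noteq> y3" using assms by auto
  have h: "(1+y2*y3+x2*x3)*(q^2*y1^2+p^2*x1^2) = 2*r^2"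
    by (rule prodA_core[of y1 x1 y2 x2 y3 x3 q p r]) (use assms \<open>y2 \<noteq> y3\<close> in \<open>simp_all add: algebra_simps\<close>)
  then show ?thesis by (simp add: algebra_simps)
next
  case False
  from prodA_core[OF _ _ _ _ _  False] assms show ?thesis by simp
qed

lemma prodB_core:
  fixes x1 y1 x2 y2 x3 y3 p q r :: real
  assumes "x1^2+y1^2=1" "x2^2+y2^2=1" "x3^2+y3^2=1"
    "p*x1*x2+q*y1*y2=r" "p*x1*x3+q*y1*y3=r" "x2 \<noteq> x3"
  shows "(1+x1*x2+y1*y2)*(1+x1*x3+y1*y3)*(p^2*x1^2+q^2*y1^2) = (p^2*x1^2+q^2*y1^2) + 2*r*(p*x1^2+q*y1^2) + r^2 - (q-p)^2*x1^2*y1^2"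
  using assms by algebra

lemma prodB:
  fixes x1 y1 x2 y2 x3 y3 p q r :: real
  assumes "x1^2+y1^2=1" "x2^2+y2^2=1" "x3^2+y3^2=1"
    "p*x1*x2+q*y1*y2=r" "p*x1*x3+q*y1*y3=r" "(x2,y2) \<noteq> (x3,y3)"
  shows "(1+x1*x2+y1*y2)*(1+x1*x3+y1*y3)*(p^2*x1^2+q^2*y1^2) = (p^2*x1^2+q^2*y1^2) + 2*r*(p*x1^2+q*y1^2) + r^2 - (q-p)^2*x1^2*y1^2"
proof (cases "x2 = x3")
  case True
  then have "y2 \<noteq> y3" using assms by auto
  have h: "(1+y1*y2+x1*x2)*(1+y1*y3+x1*x3)*(q^2*y1^2+p^2*x1^2) = (q^2*y1^2+p^2*x1^2) + 2*r*(q*y1^2+p*x1^2) + r^2 - (p-q)^2*y1^2*x1^2"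
    by (rule prodB_core[of y1 x1 y2 x2 y3 x3 q p r]) (use assms \<open>y2 \<noteq> y3\<close> in \<open>simp_all add: algebra_simps\<close>)
  then show ?thesis by (simp add: algebra_simps power2_commute)
next
  case False
  from prodB_core[OF _ _ _ _ _  False] assms show ?thesis by simp
qed

lemma prodC:
  fixes x1 y1 K C S :: real
  assumes "x1^2+y1^2=1" "K^2*C^2+2*K*S-3=0" "S - C = 2*b^2"
  shows "4*(((1-K*C)^2*x1^2+(1+K*C)^2*y1^2) + 2*(1-K*S)*((1-K*C)*x1^2+(1+K*C)*y1^2) + (1-K*S)^2 - (2*K*C)^2*x1^2*y1^2)
     = ((1-K*C)^2*x1^2+(1+K*C)^2*y1^2)^2"
  using assms by algebra

lemma noneq:
  fixes x1 y1 x2 y2 x3 y3 p q r :: real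
  assumes "x1^2+y1^2=1" "x2^2+y2^2=1" "x3^2+y3^2=1"
    "p*x1*x2+q*y1*y2=r" "p*x1*x3+q*y1*y3=r" "p*x2*x3+q*y2*y3=r"
    "(x1,y1) \<noteq> (x2,y2)" "(x2,y2) \<noteq> (x3,y3)" "(x1,y1) \<noteq> (x3,y3)"
    "x1^2 = x2^2" "x1^2 = x3^2" "q > 0"
  shows False
proof -
  have y: "y1^2 = y2^2" "y1^2 = y3^2" using assms(1-3,10,11) by auto
  have sx: "x2 = x1 \<or> x2 = -x1" "x3 = x1 \<or> x3 = -x1" using assms(10,11) by (auto simp: power2_eq_iff)
  have sy: "y2 = y1 \<or> y2 = -y1" "y3 = y1 \<or> y3 = -y1" using y by (auto simp: power2_eq_iff)
  have "x1 \<noteq> 0" "y1 \<noteq> 0" using sx sy assms(7-9) by auto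
  then have Q: "q*(y1*y1) > 0" using \<open>q>0\<close> by (auto simp add: zero_less_mult_iff linorder_neq_iff)
  show False using sx sy assms(4-9) Q
    by (elim disjE) (simp_all add: algebra_simps, linarith?)
qed


lemma Kval:
  fixes a b K :: real
  assumes ab: "a>b" "b>0" and K: "K>0" and eq: "K^2*(a^2-b^2)^2 + 2*K*(a^2+b^2) - 3 = 0"
  shows "joach_J a b = sqrt K" "joach_J a b * perim_L a b - 4 = K*(a^2+b^2) - 1" "K*(a^2+b^2) > 1"
proof -
  define C where "C = a^2-b^2"
  define S where "S = a^2+b^2"
  have C: "C > 0" unfolding C_def using ab by (simp add: power_strict_mono)
  have SC: "S > C" unfolding S_def C_def using ab by simp
  have eq': "K^2*C^2 + 2*K*S - 3 = 0" using eq unfolding C_def S_def .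
  have sq: "(K*C^2 + S)^2 = 4*(a^4 - a^2*b^2+b^4)"
    using eq' unfolding C_def S_def by algebra
  have pos: "K*C^2 + S > 0" using K C SC by (simp add: add_pos_pos)
  have d: "2*ell_delta a b = K*C^2 + S"
  proof -
    have "sqrt ((K*C^2 + S)^2) = K*C^2 + S" using pos by simp
    moreover have "sqrt ((K*C^2 + S)^2) = 2*ell_delta a b"
    proof -
      have s4: "sqrt 4 = (2::real)" using real_sqrt_abs[of 2] by simp
      have "sqrt (4*(a^4 - a^2*b^2+b^4)) = 2 * sqrt (a^4 - a^2*b^2+b^4)"
        by (simp only: real_sqrt_mult s4)
      then show ?thesis unfolding sq ell_delta_def by simp
    qed
    ultimately show ?thesis by simp
  qed
  have J: "joach_J a b = sqrt K"
  proof -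
    have "2 * ell_delta a b - a^2 - b^2 = K*C^2" using d unfolding S_def by simp
    then have "joach_J a b = sqrt (K*C^2)/C" unfolding joach_J_def C_def by simp
    also have "\<dots> = sqrt K" using C by (simp add: real_sqrt_mult)
    finally show ?thesis .
  qed
  show "joach_J a b = sqrt K" by (rule J)
  have "joach_J a b * perim_L a b = 2*(ell_delta a b + a^2+b^2)*K"
  proof -
    have e: "sqrt K * sqrt K = K" using K by simp
    have "joach_J a b * perim_L a b = 2*(ell_delta a b + a^2+b^2)*(joach_J a b * joach_J a b)"
      unfolding perim_L_def by algebra
    then show ?thesis unfolding J e .
  qed
  also have "\<dots> = (K*C^2 + 3*S)*K" using d unfolding S_def by (simp add: algebra_simps)
  also have "\<dots> = 3 + K*S" using eq' by (simp add: algebra_simps power2_eq_square)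
  finally show "joach_J a b * perim_L a b - 4 = K*(a^2+b^2) - 1" unfolding S_def by simp
  show "K*(a^2+b^2) > 1"
  proof (rule ccontr)
    assume "\<not> K*(a^2+b^2) > 1"
    then have h: "K*S \<le> 1" unfolding S_def by simp
    then have "(K*C)^2 \<ge> 1" using eq' by (simp add: power_mult_distrib)
    then have "K*C \<ge> 1"
    proof (rule contrapos_pp)
      assume "\<not> K*C \<ge> 1"
      then have "K*C < 1" by simp
      moreover have "0 \<le> K*C" using K C by simp
      ultimately have "(K*C)^2 < 1^2" by (rule power_strict_mono) simp
      then show "\<not> (K*C)^2 \<ge> 1" by simp
    qed
    moreover have "K*C < K*S" using K SC by simp
    ultimately show False using h by simp
  qed
qed

lemma tm:
  fixes a b x y x' y' :: real
  assumes ab: "a>0" "b>0" and D: "x*y' - x'*y \<noteq> 0"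
  shows "tangent_meet a b (a*x,b*y) (a*x',b*y') = (a*((y'-y)/(x*y'-x'*y)), b*((x-x')/(x*y'-x'*y)))"
proof -
  have ot: "on_tangent a b (a*u,b*v) X \<longleftrightarrow> (fst X/a)*u + (snd X/b)*v = 1" for u v X
    unfolding on_tangent_def using ab by (simp add: power2_eq_square field_simps)
  show ?thesis
    unfolding tangent_meet_def
  proof (rule the_equality)
    show "on_tangent a b (a * x, b * y) (a*((y'-y)/(x*y'-x'*y)), b*((x-x')/(x*y'-x'*y))) \<and>
          on_tangent a b (a * x', b * y') (a*((y'-y)/(x*y'-x'*y)), b*((x-x')/(x*y'-x'*y)))"
    proof -
      have "(y'-y)/(x*y'-x'*y)*x + (x-x')/(x*y'-x'*y)*y = ((y'-y)*x + (x-x')*y)/(x*y'-x'*y)"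
        by (simp add: add_divide_distrib)
      also have "\<dots> = 1" using D by (simp add: algebra_simps)
      finally have 1: "(y'-y)/(x*y'-x'*y)*x + (x-x')/(x*y'-x'*y)*y = 1" .
      have "(y'-y)/(x*y'-x'*y)*x' + (x-x')/(x*y'-x'*y)*y' = ((y'-y)*x' + (x-x')*y')/(x*y'-x'*y)"
        by (simp add: add_divide_distrib)
      also have "\<dots> = 1" using D by (simp add: algebra_simps)
      finally have 2: "(y'-y)/(x*y'-x'*y)*x' + (x-x')/(x*y'-x'*y)*y' = 1" .
      show ?thesis unfolding ot using ab 1 2 by simp
    qed
  next
    fix X assume h: "on_tangent a b (a * x, b * y) X \<and> on_tangent a b (a * x', b * y') X"
    define u where "u = fst X/a"
    define v where "v = snd X/b"
    have e1: "u*x + v*y = 1" "u*x'+v*y' = 1" using h unfolding ot u_def v_def by auto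
    have "u*(x*y'-x'*y) = y'-y" using e1 by algebra
    then have u: "u = (y'-y)/(x*y'-x'*y)" using D by (simp add: field_simps)
    have "v*(x*y'-x'*y) = x-x'" using e1 by algebra
    then have v: "v = (x-x')/(x*y'-x'*y)" using D by (simp add: field_simps)
    have "X = (a*u, b*v)" unfolding u_def v_def using ab by (simp add: prod_eq_iff)
    then show "X = (a*((y'-y)/(x*y'-x'*y)), b*((x-x')/(x*y'-x'*y)))" using u v by simp
  qed
qed



theorem mainTheorem9:
  fixes a b :: real and P1 P2 P3 :: pt
  assumes "a > b" and "b > 0"
    and "three_periodic a b P1 P2 P3"
  shows "outer_area a b P1 P2 P3 / tri_area P1 P2 P3
           = 2 / (joach_J a b * perim_L a b - 4)"
proof -
  have b0: "b > 0" using assms(2) .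
  have a0: "a > 0" using assms by simp
  define x1 where "x1 = fst P1 / a"
  define y1 where "y1 = snd P1 / b"
  define x2 where "x2 = fst P2 / a"
  define y2 where "y2 = snd P2 / b"
  define x3 where "x3 = fst P3 / a"
  define y3 where "y3 = snd P3 / b"
  have P1: "P1 = (a*x1, b*y1)" unfolding x1_def y1_def using a0 b0 by (simp add: prod_eq_iff)
  have P2: "P2 = (a*x2, b*y2)" unfolding x2_def y2_def using a0 b0 by (simp add: prod_eq_iff)
  have P3: "P3 = (a*x3, b*y3)" unfolding x3_def y3_def using a0 b0 by (simp add: prod_eq_iff)
  have oe: "on_ellipse a b (a*u, b*v) \<longleftrightarrow> u^2+v^2 = 1" for u v
    unfolding on_ellipse_def using a0 b0 by (simp add: power_mult_distrib)
  note tp = assms(3)[unfolded three_periodic_def P1 P2 P3]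
  have c1: "x1^2+y1^2=1" and c2: "x2^2+y2^2=1" and c3: "x3^2+y3^2=1" using tp oe by auto
  define \<Sigma> where "\<Sigma> = (x2-x1)*(y3-y1) - (y2-y1)*(x3-x1)"
  have "cross2 (a*x2 - a*x1, b*y2 - b*y1) (a*x3 - a*x1, b*y3 - b*y1) = a*b*\<Sigma>"
    unfolding cross2_def \<Sigma>_def by (simp add: algebra_simps)
  then have S0: "\<Sigma> \<noteq> 0" using tp by auto
  have d12: "(x1,y1) \<noteq> (x2,y2)" using S0 unfolding \<Sigma>_def by auto
  have d13: "(x1,y1) \<noteq> (x3,y3)" using S0 unfolding \<Sigma>_def by auto
  have d23: "(x2,y2) \<noteq> (x3,y3)" using S0 unfolding \<Sigma>_def by (auto simp: algebra_simps)
  have h1: "(x1*x3+y1*y3-1)/dd a b x1 y1 x3 y3 = (x1*x2+y1*y2-1)/dd a b x1 y1 x2 y2"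
    by (rule bounce_circ[OF a0 b0 c1]) (use tp S0 in \<open>auto simp: \<Sigma>_def algebra_simps\<close>)
  have h2: "(x2*x1+y2*y1-1)/dd a b x2 y2 x1 y1 = (x2*x3+y2*y3-1)/dd a b x2 y2 x3 y3"
    by (rule bounce_circ[OF a0 b0 c2]) (use tp S0 in \<open>auto simp: \<Sigma>_def algebra_simps\<close>)
  have h3: "(x3*x2+y3*y2-1)/dd a b x3 y3 x2 y2 = (x3*x1+y3*y1-1)/dd a b x3 y3 x1 y1"
    by (rule bounce_circ[OF a0 b0 c3]) (use tp S0 in \<open>auto simp: \<Sigma>_def algebra_simps\<close>)
  define D12 where "D12 = dd a b x1 y1 x2 y2"
  define D13 where "D13 = dd a b x1 y1 x3 y3"
  define D23 where "D23 = dd a b x2 y2 x3 y3"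
  have D12: "D12 > 0" unfolding D12_def using dd_pos[OF a0 b0 d12] .
  have D13: "D13 > 0" unfolding D13_def using dd_pos[OF a0 b0 d13] .
  have D23: "D23 > 0" unfolding D23_def using dd_pos[OF a0 b0 d23] .
  define k where "k = (1 - (x1*x2+y1*y2))/D12"
  have g12: "1 - (x1*x2+y1*y2) = k*D12" unfolding k_def using D12 by simp
  have g13: "1 - (x1*x3+y1*y3) = k*D13"
  proof -
    have "(x1*x3+y1*y3-1)/D13 = (x1*x2+y1*y2-1)/D12" using h1 unfolding D12_def D13_def .
    then have "(1-(x1*x3+y1*y3))/D13 = k" unfolding k_def by (metis minus_diff_eq minus_divide_left)
    then show ?thesis using D13 by (simp add: field_simps)
  qed
  have g23: "1 - (x2*x3+y2*y3) = k*D23"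
  proof -
    have "(x2*x1+y2*y1-1)/D12 = (x2*x3+y2*y3-1)/D23" using h2 unfolding D12_def D23_def
      by (simp add: dd_sym[of a b x2 y2])
    then have "(1-(x2*x3+y2*y3))/D23 = k" unfolding k_def
      by (metis minus_diff_eq minus_divide_left mult.commute)
    then show ?thesis using D23 by (simp add: field_simps)
  qed
  have nc12: "x1*x2+y1*y2 \<noteq> 1"
  proof
    assume "x1*x2+y1*y2 = 1"
    then have "(x1-x2)^2+(y1-y2)^2 = 0" using c1 c2 by (simp add: power2_diff algebra_simps)
    then show False using d12 by (simp add: sum_power2_eq_zero_iff)
  qed
  have nc13: "x1*x3+y1*y3 \<noteq> 1"
  proof
    assume "x1*x3+y1*y3 = 1"
    then have "(x1-x3)^2+(y1-y3)^2 = 0" using c1 c3 by (simp add: power2_diff algebra_simps)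
    then show False using d13 by (simp add: sum_power2_eq_zero_iff)
  qed
  have nc23: "x2*x3+y2*y3 \<noteq> 1"
  proof
    assume "x2*x3+y2*y3 = 1"
    then have "(x2-x3)^2+(y2-y3)^2 = 0" using c2 c3 by (simp add: power2_diff algebra_simps)
    then show False using d23 by (simp add: sum_power2_eq_zero_iff)
  qed
  have pos12: "1 - (x1*x2+y1*y2) > 0"
  proof -
    have "2*(1 - (x1*x2+y1*y2)) = (x1-x2)^2+(y1-y2)^2" using c1 c2 by (simp add: power2_diff algebra_simps)
    moreover have "(x1-x2)^2+(y1-y2)^2 > 0" using d12 by (simp add: sum_power2_gt_zero_iff)
    ultimately show ?thesis by simp
  qed
  have k0: "k > 0" using pos12 D12 unfolding k_def by simp
  define K where "K = k^2"
  have K0: "K > 0" unfolding K_def using k0 by simp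
  define C where "C = a^2-b^2"
  define S where "S = a^2+b^2"
  have C0: "C > 0" unfolding C_def using assms by (simp add: power_strict_mono)
  define p where "p = 1 - K*C"
  define q where "q = 1 + K*C"
  define r where "r = 1 - K*S"
  have r12: "p*x1*x2+q*y1*y2 = r" unfolding p_def q_def r_def C_def S_def
    by (rule pair_rel[OF c1 c2 nc12]) (simp add: g12 K_def D12_def dd_sq power_mult_distrib)
  have r13: "p*x1*x3+q*y1*y3 = r" unfolding p_def q_def r_def C_def S_def
    by (rule pair_rel[OF c1 c3 nc13]) (simp add: g13 K_def D13_def dd_sq power_mult_distrib)
  have r23: "p*x2*x3+q*y2*y3 = r" unfolding p_def q_def r_def C_def S_def
    by (rule pair_rel[OF c2 c3 nc23]) (simp add: g23 K_def D23_def dd_sq power_mult_distrib)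
  have r21: "p*x2*x1+q*y2*y1 = r" using r12 by (simp add: algebra_simps)
  have r31: "p*x3*x1+q*y3*y1 = r" using r13 by (simp add: algebra_simps)
  have r32: "p*x3*x2+q*y3*y2 = r" using r23 by (simp add: algebra_simps)
  define A where "A = p^2*(q+r) - q^2*(p+r)"
  define B where "B = (p+q)*r^2 - q^2*(p+r)"
  have v1: "A*x1^2 = B" unfolding A_def B_def by (rule vieta1[OF c1 c2 c3 r12 r13 r23 d23])
  have v2: "A*x2^2 = B" unfolding A_def B_def
    by (rule vieta1[OF c2 c1 c3 r21 r23 r13]) (use d13 in auto)
  have v3: "A*x3^2 = B" unfolding A_def B_def
    by (rule vieta1[OF c3 c1 c2 r31 r32 r12]) (use d12 in auto)
  have q0: "q > 0" unfolding q_def using K0 C0 by (simp add: add_pos_pos)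
  have A0: "A = 0"
  proof (rule ccontr)
    assume "A \<noteq> 0"
    then have "x1^2 = x2^2" "x1^2 = x3^2" using v1 v2 v3 by (metis mult_left_cancel)+
    then show False using noneq[OF c1 c2 c3 r12 r13 r23 d12 d23 d13 _ _ q0] by simp
  qed
  have "A = 2*K*C*(K^2*C^2+2*K*S-3)" unfolding A_def p_def q_def r_def
    by (simp add: power2_eq_square algebra_simps)
  then have Keq: "K^2*C^2+2*K*S-3 = 0" using A0 K0 C0 by simp
  have Keq': "K^2*(a^2-b^2)^2 + 2*K*(a^2+b^2) - 3 = 0" using Keq unfolding C_def S_def .
  note KV = Kval[OF assms(1,2) K0 Keq']
  have Jk: "joach_J a b = k" using KV(1) k0 unfolding K_def by simp
  have rneg: "r < 0" using KV(3) unfolding r_def S_def by simp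
  have JL: "joach_J a b * perim_L a b - 4 = - r" using KV(2) unfolding r_def S_def by simp
  define D1 where "D1 = p^2*x1^2+q^2*y1^2"
  have pA: "(1+x2*x3+y2*y3)*D1 = 2*r^2" unfolding D1_def by (rule prodA[OF c1 c2 c3 r12 r13 d23])
  have pB: "(1+x1*x2+y1*y2)*(1+x1*x3+y1*y3)*D1 = D1 + 2*r*(p*x1^2+q*y1^2) + r^2 - (q-p)^2*x1^2*y1^2"
    unfolding D1_def by (rule prodB[OF c1 c2 c3 r12 r13 d23])
  have pC: "4*(D1 + 2*r*(p*x1^2+q*y1^2) + r^2 - (q-p)^2*x1^2*y1^2) = D1^2"
  proof -
    have "S - C = 2*b^2" unfolding S_def C_def by simp
    from prodC[OF c1 Keq this] show ?thesis unfolding D1_def p_def q_def r_def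
      by (simp add: algebra_simps)
  qed
  have D1nz: "D1 \<noteq> 0" using pA rneg by auto
  define \<Pi> where "\<Pi> = (1+x1*x2+y1*y2)*(1+x1*x3+y1*y3)*(1+x2*x3+y2*y3)"
  have Pi: "2*\<Pi> = r^2"
  proof -
    have "\<Pi>*D1^2 = ((1+x2*x3+y2*y3)*D1) * ((1+x1*x2+y1*y2)*(1+x1*x3+y1*y3)*D1)"
      unfolding \<Pi>_def by (simp add: power2_eq_square mult_ac)
    also have "\<dots> = 2*r^2 * (D1 + 2*r*(p*x1^2+q*y1^2) + r^2 - (q-p)^2*x1^2*y1^2)"
      unfolding pA pB ..
    finally have "4*(\<Pi>*D1^2) = 2*r^2*(4*(D1 + 2*r*(p*x1^2+q*y1^2) + r^2 - (q-p)^2*x1^2*y1^2))"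
      by simp
    also have "\<dots> = 2*r^2*D1^2" using pC by simp
    finally show ?thesis using D1nz by simp
  qed
  have Pnz: "\<Pi> \<noteq> 0" using Pi rneg by auto
  have e12: "1+(x1*x2+y1*y2) \<noteq> 0" and e13: "1+(x1*x3+y1*y3) \<noteq> 0" and e23: "1+(x2*x3+y2*y3) \<noteq> 0"
    using Pnz unfolding \<Pi>_def by (auto simp: add.assoc)
  define \<Delta>12 where "\<Delta>12 = x1*y2 - x2*y1"
  define \<Delta>23 where "\<Delta>23 = x2*y3 - x3*y2"
  define \<Delta>31 where "\<Delta>31 = x3*y1 - x1*y3"
  have sq12: "\<Delta>12^2 = (1-(x1*x2+y1*y2))*(1+(x1*x2+y1*y2))" unfolding \<Delta>12_def using c1 c2 by algebra
  have sq23: "\<Delta>23^2 = (1-(x2*x3+y2*y3))*(1+(x2*x3+y2*y3))" unfolding \<Delta>23_def using c2 c3 by algebra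
  have sq31: "\<Delta>31^2 = (1-(x1*x3+y1*y3))*(1+(x1*x3+y1*y3))" unfolding \<Delta>31_def using c1 c3 by algebra
  have n12: "\<Delta>12 \<noteq> 0" using sq12 nc12 e12 by auto
  have n23: "\<Delta>23 \<noteq> 0" using sq23 nc23 e23 by auto
  have n31: "\<Delta>31 \<noteq> 0" using sq31 nc13 e13 by auto
  have m12: "tangent_meet a b P1 P2 = (a*((y2-y1)/\<Delta>12), b*((x1-x2)/\<Delta>12))"
    unfolding P1 P2 \<Delta>12_def by (rule tm[OF a0 b0]) (use n12 in \<open>simp add: \<Delta>12_def\<close>)
  have m23: "tangent_meet a b P2 P3 = (a*((y3-y2)/\<Delta>23), b*((x2-x3)/\<Delta>23))"
    unfolding P2 P3 \<Delta>23_def by (rule tm[OF a0 b0]) (use n23 in \<open>simp add: \<Delta>23_def\<close>)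
  have m31: "tangent_meet a b P3 P1 = (a*((y1-y3)/\<Delta>31), b*((x3-x1)/\<Delta>31))"
    unfolding P3 P1 \<Delta>31_def by (rule tm[OF a0 b0]) (use n31 in \<open>simp add: \<Delta>31_def\<close>)
  define co where "co = ((y3-y2)/\<Delta>23 - (y2-y1)/\<Delta>12)*((x3-x1)/\<Delta>31 - (x1-x2)/\<Delta>12)
     - ((x2-x3)/\<Delta>23 - (x1-x2)/\<Delta>12)*((y1-y3)/\<Delta>31 - (y2-y1)/\<Delta>12)"
  have OA: "outer_area a b P1 P2 P3 = \<bar>a*b*co\<bar>/2"
    unfolding outer_area_def m12 m23 m31 tri_area_def cross2_def co_def
    by (simp add: algebra_simps)
  have TA: "tri_area P1 P2 P3 = \<bar>a*b*\<Sigma>\<bar>/2"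
    unfolding tri_area_def cross2_def \<Sigma>_def P1 P2 P3 by (simp add: algebra_simps)
  have ratio: "outer_area a b P1 P2 P3 / tri_area P1 P2 P3 = \<bar>co\<bar>/\<bar>\<Sigma>\<bar>"
    unfolding OA TA using a0 b0 by (simp add: abs_mult)
  have coid: "co*(\<Delta>12*\<Delta>23*\<Delta>31) = \<Sigma>^2"
  proof -
    have "co*(\<Delta>12*\<Delta>23*\<Delta>31) = ((y3-y2)*\<Delta>12 - (y2-y1)*\<Delta>23)*((x3-x1)*\<Delta>12 - (x1-x2)*\<Delta>31)/\<Delta>12
      - ((x2-x3)*\<Delta>12 - (x1-x2)*\<Delta>23)*((y1-y3)*\<Delta>12 - (y2-y1)*\<Delta>31)/\<Delta>12"
      unfolding co_def using n12 n23 n31 by (simp add: field_simps)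
    also have "\<dots> = \<Sigma>^2"
    proof -
      have "((y3-y2)*\<Delta>12 - (y2-y1)*\<Delta>23)*((x3-x1)*\<Delta>12 - (x1-x2)*\<Delta>31)
        - ((x2-x3)*\<Delta>12 - (x1-x2)*\<Delta>23)*((y1-y3)*\<Delta>12 - (y2-y1)*\<Delta>31) = \<Sigma>^2*\<Delta>12"
        unfolding \<Delta>12_def \<Delta>23_def \<Delta>31_def \<Sigma>_def by (simp add: algebra_simps power2_eq_square)
      then show ?thesis using n12 by (simp add: diff_divide_distrib[symmetric])
    qed
    finally show ?thesis .
  qed
  have Ssq: "\<Sigma>^2 = 2*(1-(x1*x2+y1*y2))*(1-(x1*x3+y1*y3))*(1-(x2*x3+y2*y3))"
    unfolding \<Sigma>_def using c1 c2 c3 by algebra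
  have R2: "(\<bar>co\<bar>/\<bar>\<Sigma>\<bar>)^2 = 4/r^2"
  proof -
    have "(\<bar>co\<bar>/\<bar>\<Sigma>\<bar>)^2 = co^2/\<Sigma>^2" by (simp add: power_divide)
    also have "co^2 = (\<Sigma>^2)^2/(\<Delta>12^2*\<Delta>23^2*\<Delta>31^2)"
    proof -
      have "co = \<Sigma>^2/(\<Delta>12*\<Delta>23*\<Delta>31)" using coid n12 n23 n31 by (simp add: field_simps)
      then show ?thesis by (simp add: power_divide power_mult_distrib)
    qed
    finally have "(\<bar>co\<bar>/\<bar>\<Sigma>\<bar>)^2 = \<Sigma>^2/(\<Delta>12^2*\<Delta>23^2*\<Delta>31^2)"
      using S0 by (simp add: power2_eq_square)
    also have "\<dots> = 2/\<Pi>"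
    proof -
      have gen: "2*(1-u)*(1-v)*(1-w)/(((1-u)*(1+u))*((1-w)*(1+w))*((1-v)*(1+v))) = 2/((1+u)*(1+v)*(1+w))"
        if "1-u \<noteq> 0" "1-v\<noteq>0" "1-w\<noteq>0" "1+u\<noteq>0" "1+v \<noteq> 0" "1+w \<noteq>0" for u v w :: real
      proof -
        have X: "(1-u)*(1-v)*(1-w) \<noteq> 0" using that by simp
        have "((1-u)*(1+u))*((1-w)*(1+w))*((1-v)*(1+v)) = ((1-u)*(1-v)*(1-w)) * ((1+u)*(1+v)*(1+w))"
          by (simp add: mult_ac)
        moreover have "2*(1-u)*(1-v)*(1-w) = ((1-u)*(1-v)*(1-w))*2" by algebra
        ultimately show ?thesis using nonzero_mult_divide_mult_cancel_left[OF X, of 2 "(1+u)*(1+v)*(1+w)"]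
          by (simp only:)
      qed
      have PP: "\<Pi> = (1+(x1*x2+y1*y2))*(1+(x1*x3+y1*y3))*(1+(x2*x3+y2*y3))"
        unfolding \<Pi>_def by (simp add: add.assoc)
      show ?thesis unfolding Ssq sq12 sq23 sq31 PP
        by (rule gen[of "x1*x2+y1*y2" "x1*x3+y1*y3" "x2*x3+y2*y3"])
          (use nc12 nc13 nc23 e12 e13 e23 in auto)
    qed
    also have "\<dots> = 4/r^2"
    proof -
      have "r^2 = 2*\<Pi>" using Pi by simp
      then show ?thesis using Pnz by simp
    qed
    finally show ?thesis .
  qed
  have "\<bar>co\<bar>/\<bar>\<Sigma>\<bar> = -2/r"
  proof -
    have "(\<bar>co\<bar>/\<bar>\<Sigma>\<bar>)^2 = (-2/r)^2" using R2 by (simp add: power_divide)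
    moreover have "\<bar>co\<bar>/\<bar>\<Sigma>\<bar> \<ge> 0" by simp
    moreover have "-2/r \<ge> 0" using rneg by (simp add: divide_nonneg_neg)
    ultimately show ?thesis using power2_eq_iff_nonneg by blast
  qed
  then show ?thesis unfolding ratio JL by simp
qed
end
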